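(* For every real $x>1$ and every $n\in\mathbb N$, $$\Phi^*_n(x)=\prod_{j=1}^n\left(x^{(j,n)_*}-1\right)^{\cos(2\pi j/n)}.$$
   Context: $d\mid\mid n$ means $d\mid n$ and $\gcd(d,n/d)=1$; $(j,n)_*=\max\{d: d\mid j,\ d\mid\mid n\}$; $\Phi^*_n(x)=\prod_{1\le j\le n,\ (j,n)_*=1}(x-e^{2\pi i j/n})$. Real powers of positive reals are the usual ones. *)

theory Defs
  imports Complex_Main "HOL-Computational_Algebra.Polynomial"
begin

definition unitary_dvd :: "nat \<Rightarrow> nat \<Rightarrow> bool" where
  "unitary_dvd d n \<longleftrightarrow> d dvd n \<and> coprime d (n div d)"

definition unitary_gcd :: "nat \<Rightarrow> nat \<Rightarrow> nat" where
  "unitary_gcd j n = Max {d. d dvd j \<and> unitary_dvd d n}"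

definition unitary_cyclotomic :: "nat \<Rightarrow> complex poly" where
  "unitary_cyclotomic n =
     (\<Prod>j\<in>{j\<in>{1..n}. unitary_gcd j n = 1}. [:- cis (2 * pi * real j / real n), 1:])"

end

theory Submission
  imports Defs "HOL-Computational_Algebra.Computational_Algebra" "HOL-Analysis.Analysis"
begin


definition qq :: "nat \<Rightarrow> nat \<Rightarrow> nat" where "qq n p = p ^ multiplicity p n"
definition QQ :: "nat \<Rightarrow> nat set \<Rightarrow> nat" where "QQ n V = (\<Prod>p\<in>V. qq n p)"
definition UU :: "nat \<Rightarrow> nat \<Rightarrow> nat set" where "UU n j = {p \<in> prime_factors n. qq n p dvd j}"

lemma coprime_qq:
  assumes "p \<in> prime_factors n" "p' \<in> prime_factors n" "p \<noteq> p'"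
  shows "coprime (qq n p) (qq n p')"
  using assms unfolding qq_def
  by (simp add: primes_coprime in_prime_factors_iff)

lemma QQ_dvd_iff:
  assumes "V \<subseteq> prime_factors n"
  shows "QQ n V dvd j \<longleftrightarrow> (\<forall>p\<in>V. qq n p dvd j)"
proof -
  have "finite V" using assms finite_subset by blast
  then show ?thesis using assms
  proof (induction V rule: finite_induct)
    case empty then show ?case by (simp add: QQ_def)
  next
    case (insert p V)
    have cop: "coprime (qq n p) (QQ n V)"
      unfolding QQ_def using insert by (intro prod_coprime_right coprime_qq) auto
    have "QQ n (insert p V) = qq n p * QQ n V" using insert by (simp add: QQ_def)
    then show ?case using insert cop
      by (auto intro: divides_mult dvd_mult_left dvd_mult_right)
  qed
qed

lemma QQ_I: "n > 0 \<Longrightarrow> QQ n (prime_factors n) = n"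
  unfolding QQ_def qq_def using prime_factorization_nat by auto

lemma QQ_compl:
  assumes "n > 0" "V \<subseteq> prime_factors n"
  shows "QQ n V * QQ n (prime_factors n - V) = n"
proof -
  have "QQ n (prime_factors n) = QQ n (prime_factors n - V) * QQ n V"
    unfolding QQ_def using assms by (intro prod.subset_diff) auto
  then show ?thesis using QQ_I[OF assms(1)] by (simp add: mult.commute)
qed

lemma QQ_coprime:
  assumes "V \<subseteq> prime_factors n"
  shows "coprime (QQ n V) (QQ n (prime_factors n - V))"
  unfolding QQ_def using assms
  by (intro prod_coprime_left prod_coprime_right coprime_qq) auto

lemma qq_gt1: "p \<in> prime_factors n \<Longrightarrow> qq n p > 1"
proof -
  assume a: "p \<in> prime_factors n"
  then have "p > 1" "multiplicity p n > 0" unfolding prime_factors_multiplicity by (auto simp: prime_gt_Suc_0_nat)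
  then show ?thesis unfolding qq_def by (intro one_less_power) auto
qed

lemma QQ_eq1:
  assumes "V \<subseteq> prime_factors n"
  shows "QQ n V = 1 \<longleftrightarrow> V = {}"
proof -
  have "finite V" using assms finite_subset by blast
  show ?thesis
  proof
    assume "QQ n V = 1"
    then have "\<forall>p\<in>V. qq n p = 1" unfolding QQ_def using \<open>finite V\<close> prod_eq_1_iff by metis
    then show "V = {}" using assms qq_gt1 by fastforce
  qed (simp add: QQ_def)
qed

lemma UG:
  assumes "n > 0"
  shows "unitary_gcd j n = QQ n (UU n j)"
proof -
  define G where "G = QQ n (UU n j)"
  define A where "A = {d. d dvd j \<and> unitary_dvd d n}"
  have V: "UU n j \<subseteq> prime_factors n" by (auto simp: UU_def)
  have GdvdJ: "G dvd j" unfolding G_def using V by (subst QQ_dvd_iff) (auto simp: UU_def)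
  have comp: "G * QQ n (prime_factors n - UU n j) = n" unfolding G_def using QQ_compl[OF assms V] .
  have Gpos: "G > 0" using comp assms by (metis gr0I mult_0)
  have "n div G = QQ n (prime_factors n - UU n j)" using comp Gpos by (metis nonzero_mult_div_cancel_left not_gr0)
  then have "unitary_dvd G n" unfolding unitary_dvd_def using QQ_coprime[OF V] comp G_def
    by (metis dvd_triv_left)
  then have GA: "G \<in> A" using GdvdJ by (simp add: A_def)
  have le: "d \<le> G" if "d \<in> A" for d
  proof -
    from that have dj: "d dvd j" and dn: "d dvd n" and cop: "coprime d (n div d)"
      by (auto simp: A_def unitary_dvd_def)
    have dpos: "d > 0" using dn assms by (metis dvd_0_left_iff gr0I less_not_refl)
    have "pd \<in> UU n j \<and> pd ^ multiplicity pd d = qq n pd" if pd: "pd \<in> prime_factors d" for pd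
    proof -
      have pr: "prime pd" and pdd: "pd dvd d" using pd by auto
      have pn: "pd \<in> prime_factors n" using pr pdd dn assms
        by (intro prime_factorsI) (auto intro: dvd_trans)
      have ndiv: "\<not> pd dvd (n div d)"
        using coprime_common_divisor[OF cop pdd] pr not_prime_unit by blast
      have nd: "n = d * (n div d)" using dn by simp
      have nz: "n div d \<noteq> 0" using nd assms by (metis mult_0_right not_gr0)
      have "multiplicity pd (d * (n div d)) = multiplicity pd d + multiplicity pd (n div d)"
        by (rule prime_elem_multiplicity_mult_distrib) (use pr dpos nz in auto)
      then have "multiplicity pd n = multiplicity pd d + multiplicity pd (n div d)"
        using nd by simp
      then have mm: "multiplicity pd n = multiplicity pd d" using not_dvd_imp_multiplicity_0[OF ndiv] by simp
      have "qq n pd dvd j" unfolding qq_def mm using multiplicity_dvd dj dvd_trans by blast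
      then show ?thesis using pn mm by (simp add: UU_def qq_def)
    qed
    then have sub: "prime_factors d \<subseteq> UU n j" and eq: "\<And>pd. pd \<in> prime_factors d \<Longrightarrow> pd ^ multiplicity pd d = qq n pd"
      by auto
    have "d = (\<Prod>pd\<in>prime_factors d. pd ^ multiplicity pd d)" using prime_factorization_nat dpos by blast
    also have "\<dots> = QQ n (prime_factors d)" unfolding QQ_def using eq by (intro prod.cong) auto
    also have "\<dots> dvd G" unfolding G_def QQ_def using sub V
      by (intro prod_dvd_prod_subset) (auto intro: finite_subset)
    finally show ?thesis using Gpos by (intro dvd_imp_le) auto
  qed
  have fin: "finite A"
  proof (rule finite_subset)
    show "A \<subseteq> {..n}" using assms by (auto simp: A_def unitary_dvd_def intro: dvd_imp_le)
  qed auto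
  show ?thesis unfolding unitary_gcd_def A_def[symmetric] G_def[symmetric]
    using Max_eqI[OF fin le GA] .
qed



lemma roots_unity_prod:
  fixes w :: complex assumes "m > 0"
  shows "(\<Prod>z\<in>{z. z^m = 1}. w - z) = w^m - 1"
proof -
  define p :: "complex poly" where "p = monom 1 m - 1"
  have pz: "poly p z = z^m - 1" for z by (simp add: p_def poly_monom)
  have dp: "poly (pderiv p) z = of_nat m * z^(m-1)" for z
    by (simp add: p_def pderiv_diff pderiv_monom poly_monom)
  have "rsquarefree p" unfolding rsquarefree_roots
  proof (intro allI notI)
    fix a assume "poly p a = 0 \<and> poly (pderiv p) a = 0"
    then have "a^m = 1" "of_nat m * a^(m-1) = 0" using pz dp by auto
    then have am: "a^m = 1" and az: "of_nat m * a^(m-1) = 0" by auto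
    have "a \<noteq> 0" using am assms by (auto simp: power_0_left)
    then show False using az assms by simp
  qed
  have cm: "coeff p m = 1" using assms by (simp add: p_def coeff_monom)
  have dg: "degree p = m"
  proof (rule antisym)
    show "degree p \<le> m" unfolding p_def by (intro degree_diff_le) (auto simp: degree_monom_le)
    show "m \<le> degree p" using cm by (intro le_degree) simp
  qed
  have lc: "lead_coeff p = 1" using dg cm by simp
  have "smult (lead_coeff p) (\<Prod>z|poly p z = 0. [:-z, 1:]) = p"
    by (rule complex_poly_decompose_rsquarefree) fact
  then have "(\<Prod>z|poly p z = 0. [:-z, 1:]) = p" using lc by simp
  then have "poly (\<Prod>z|poly p z = 0. [:-z, 1:]) w = poly p w" by simp
  then show ?thesis using pz by (simp add: poly_prod)
qed

lemma cis_shift_prod: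
  fixes f :: "complex \<Rightarrow> 'a::comm_monoid_mult"
  assumes "m > 0"
  shows "(\<Prod>k\<in>{1..m}. f (cis (2*pi*real k/real m))) = (\<Prod>k<m. f (cis (2*pi*real k/real m)))"
proof -
  have a: "{1..m} = insert m {1..<m}" using assms by auto
  have b: "{..<m} = insert 0 {1..<m}" using assms by auto
  have c: "cis (2*pi*real m/real m) = cis (2*pi*real 0/real m)" using assms by simp
  show ?thesis unfolding a b using c by simp
qed

lemma cis_shift_sum:
  fixes f :: "complex \<Rightarrow> 'a::comm_monoid_add"
  assumes "m > 0"
  shows "(\<Sum>k\<in>{1..m}. f (cis (2*pi*real k/real m))) = (\<Sum>k<m. f (cis (2*pi*real k/real m)))"
proof -
  have a: "{1..m} = insert m {1..<m}" using assms by auto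
  have b: "{..<m} = insert 0 {1..<m}" using assms by auto
  have c: "cis (2*pi*real m/real m) = cis (2*pi*real 0/real m)" using assms by simp
  show ?thesis unfolding a b using c by simp
qed

lemma roots_prod2:
  fixes w :: complex assumes "m > 0"
  shows "(\<Prod>k\<in>{1..m}. w - cis (2*pi*real k/real m)) = w^m - 1"
proof -
  have "(\<Prod>k\<in>{1..m}. w - cis (2*pi*real k/real m)) = (\<Prod>k<m. w - cis (2*pi*real k/real m))"
    using cis_shift_prod[OF assms, of "\<lambda>z. w - z"] .
  also have "\<dots> = (\<Prod>z\<in>{z. z^m = 1}. w - z)"
    by (rule prod.reindex_bij_betw[OF Complex.bij_betw_roots_unity[OF assms], of "\<lambda>z. w - z"])
  finally show ?thesis using roots_unity_prod[OF assms] by simp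
qed

lemma cos_sum:
  assumes "m > 0"
  shows "(\<Sum>k\<in>{1..m}. cos (2*pi*real k/real m)) = (if m = 1 then 1 else 0)"
proof (cases "m = 1")
  case True then show ?thesis by simp
next
  case False
  then have m1: "m > 1" using assms by simp
  have "(\<Sum>k\<in>{1..m}. cis (2*pi*real k/real m)) = (\<Sum>k<m. cis (2*pi*real k/real m))"
    using cis_shift_sum[OF assms, of "\<lambda>z. z"] .
  also have "\<dots> = \<Sum>{z::complex. z^m = 1}"
    by (rule sum.reindex_bij_betw[OF Complex.bij_betw_roots_unity[OF assms], of "\<lambda>z. z"])
  also have "\<dots> = 0" by (rule sum_roots_unity[OF m1])
  finally have "Re (\<Sum>k\<in>{1..m}. cis (2*pi*real k/real m)) = 0" by simp
  then show ?thesis using False by (simp add: Re_sum)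
qed



lemma alt_sum_pow:
  assumes "finite S"
  shows "(\<Sum>W\<in>Pow S. (-1::'a::comm_ring_1)^card W) = (if S = {} then 1 else 0)"
proof -
  have "(\<Prod>x\<in>S. (-1::'a) + 1) = (\<Sum>X\<in>Pow S. (\<Prod>x\<in>X. -1) * (\<Prod>x\<in>S-X. 1))"
    by (rule prod_add[OF assms])
  moreover have "S \<noteq> {} \<Longrightarrow> card S > 0" using assms by (simp add: card_gt_0_iff)
  ultimately show ?thesis using assms by (auto simp: power_0_left)
qed

lemma CL:
  assumes "finite I" "T \<subseteq> I" "U \<subseteq> I"
  shows "(if U = T then 1 else 0 :: 'a::comm_ring_1) =
    (\<Sum>W\<in>Pow (I - T). (-1)^card W * (if T \<union> W \<subseteq> U then 1 else 0))"
proof (cases "T \<subseteq> U")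
  case True
  have "(\<Sum>W\<in>Pow (I - T). (-1)^card W * (if T \<union> W \<subseteq> U then 1 else 0 :: 'a)) =
        (\<Sum>W\<in>Pow (I - T). if W \<subseteq> U - T then (-1)^card W else 0)"
    using True by (intro sum.cong) auto
  also have "\<dots> = (\<Sum>W\<in>{W\<in>Pow (I - T). W \<subseteq> U - T}. (-1)^card W)"
    using assms by (subst sum.inter_filter) auto
  also have "{W\<in>Pow (I - T). W \<subseteq> U - T} = Pow (U - T)" using assms by auto
  also have "(\<Sum>W\<in>Pow (U - T). (-1::'a)^card W) = (if U - T = {} then 1 else 0)"
    using assms by (intro alt_sum_pow) (auto intro: finite_subset)
  finally show ?thesis using True by auto
next
  case False
  then show ?thesis by (auto intro!: sum.neutral)
qed

lemma bij_multiples: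
  fixes c n :: nat
  assumes "c > 0" "c dvd n"
  shows "bij_betw (\<lambda>k. c*k) {1..n div c} {j\<in>{1..n}. c dvd j}"
  unfolding bij_betw_def
proof
  show "inj_on (\<lambda>k. c*k) {1..n div c}" by (intro inj_onI) (use assms in simp)
  show "(\<lambda>k. c*k) ` {1..n div c} = {j\<in>{1..n}. c dvd j}"
  proof
    show "(\<lambda>k. c*k) ` {1..n div c} \<subseteq> {j\<in>{1..n}. c dvd j}"
    proof (rule image_subsetI)
      fix k assume k: "k \<in> {1..n div c}"
      have a: "1 \<le> c*k" using assms k by simp
      have "c * k \<le> c * (n div c)" using k by simp
      then have b: "c*k \<le> n" using assms by simp
      show "c*k \<in> {j\<in>{1..n}. c dvd j}" using a b by simp
    qed
    show "{j\<in>{1..n}. c dvd j} \<subseteq> (\<lambda>k. c*k) ` {1..n div c}"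
    proof
      fix j assume "j \<in> {j\<in>{1..n}. c dvd j}"
      then have j: "j \<in> {1..n}" "c dvd j" by auto
      then have e: "j = c * (j div c)" by simp
      have "j div c \<noteq> 0" using e j by (metis atLeastAtMost_iff mult_0_right not_one_le_zero)
      moreover have "j div c \<le> n div c" using j by (simp add: div_le_mono)
      ultimately have "j div c \<in> {1..n div c}" by simp
      then show "j \<in> (\<lambda>k. c*k) ` {1..n div c}" using e by blast
    qed
  qed
qed

lemma sum_multiples:
  fixes c n :: nat
  assumes "c > 0" "c dvd n"
  shows "(\<Sum>j\<in>{j\<in>{1..n}. c dvd j}. \<phi> j) = (\<Sum>k\<in>{1..n div c}. \<phi> (c*k))"
  by (rule sum.reindex_bij_betw[OF bij_multiples[OF assms], symmetric])

lemma KEY: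
  fixes \<phi> :: "nat \<Rightarrow> 'a::comm_ring_1"
  assumes "n > 0" "T \<subseteq> prime_factors n"
  shows "(\<Sum>j\<in>{1..n}. (if UU n j = T then 1 else 0) * \<phi> j) =
    (\<Sum>W\<in>Pow (prime_factors n - T). (-1)^card W * (\<Sum>j\<in>{j\<in>{1..n}. QQ n (T \<union> W) dvd j}. \<phi> j))"
proof -
  let ?I = "prime_factors n"
  have UI: "UU n j \<subseteq> ?I" for j by (auto simp: UU_def)
  have dv: "T \<union> W \<subseteq> UU n j \<longleftrightarrow> QQ n (T \<union> W) dvd j" if "W \<subseteq> ?I - T" for W j
    using that assms by (subst QQ_dvd_iff) (auto simp: UU_def)
  have "(\<Sum>j\<in>{1..n}. (if UU n j = T then 1 else 0) * \<phi> j) =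
        (\<Sum>j\<in>{1..n}. (\<Sum>W\<in>Pow (?I - T). (-1)^card W * (if T \<union> W \<subseteq> UU n j then 1 else 0)) * \<phi> j)"
    using assms UI by (intro sum.cong refl, subst CL[of ?I T]) auto
  also have "\<dots> = (\<Sum>j\<in>{1..n}. \<Sum>W\<in>Pow (?I - T). (-1)^card W * ((if T \<union> W \<subseteq> UU n j then 1 else 0) * \<phi> j))"
    by (simp add: sum_distrib_right mult.assoc)
  also have "\<dots> = (\<Sum>W\<in>Pow (?I - T). \<Sum>j\<in>{1..n}. (-1)^card W * ((if T \<union> W \<subseteq> UU n j then 1 else 0) * \<phi> j))"
    by (rule sum.swap)
  also have "\<dots> = (\<Sum>W\<in>Pow (?I - T). (-1)^card W * (\<Sum>j\<in>{1..n}. if QQ n (T \<union> W) dvd j then \<phi> j else 0))"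
    using dv by (intro sum.cong refl) (auto simp: sum_distrib_left intro!: sum.cong)
  also have "\<dots> = (\<Sum>W\<in>Pow (?I - T). (-1)^card W * (\<Sum>j\<in>{j\<in>{1..n}. QQ n (T \<union> W) dvd j}. \<phi> j))"
    by (subst sum.inter_filter) auto
  finally show ?thesis .
qed

lemma expE:
  fixes a b :: complex
  assumes "exp a = exp b"
  shows "exp ((-1)^k * a) = exp ((-1)^k * b)"
proof (cases "even k")
  case True then show ?thesis using assms by simp
next
  case False then show ?thesis using assms by (simp add: exp_minus)
qed



lemma cos_mult:
  assumes "n > 0" "c * m = n"
  shows "cos (2 * pi * real (c * k) / real n) = cos (2*pi*real k/real m)"
proof -
  have "real n = real c * real m" using assms(2) by (metis of_nat_mult)
  moreover have "c > 0" "m > 0" using assms by auto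
  ultimately show ?thesis by (simp add: field_simps)
qed

lemma zeta_mult:
  assumes "n > 0" "c * m = n"
  shows "cis (2 * pi * real (c * k) / real n) = cis (2*pi*real k/real m)"
proof -
  have "real n = real c * real m" using assms(2) by (metis of_nat_mult)
  moreover have "c > 0" "m > 0" using assms by auto
  ultimately show ?thesis by (simp add: field_simps)
qed

theorem theorem4p5:
  fixes x :: real and n :: nat
  assumes "x > 1"
  shows "poly (unitary_cyclotomic n) (complex_of_real x) =
    complex_of_real (\<Prod>j=1..n. (x ^ unitary_gcd j n - 1) powr cos (2 * pi * real j / real n))"
proof (cases "n = 0")
  case True then show ?thesis by (simp add: unitary_cyclotomic_def)
next
  case False
  then have n0: "n > 0" by simp
  define I where "I = prime_factors n"
  have finI: "finite I" by (simp add: I_def)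
  define \<zeta> where "\<zeta> j = cis (2 * pi * real j / real n)" for j :: nat
  define h where "h T = ln (x ^ QQ n T - 1)" for T
  define f where "f j = Ln (complex_of_real x - \<zeta> j)" for j
  have UI: "UU n j \<subseteq> I" for j by (auto simp: UU_def I_def)
  have QQpos: "QQ n V > 0" if "V \<subseteq> I" for V
    using QQ_compl[OF n0, of V] that n0 by (auto simp: I_def) (metis gr0I mult_0)
  have ndiv: "n div QQ n V = QQ n (I - V)" if "V \<subseteq> I" for V
  proof -
    have e: "QQ n V * QQ n (I - V) = n" using QQ_compl[OF n0, of V] that by (simp add: I_def)
    have "n div QQ n V = QQ n V * QQ n (I - V) div QQ n V" by (simp add: e)
    also have "\<dots> = QQ n (I - V)" using QQpos[OF that] by simp
    finally show ?thesis .
  qed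
  have QQdvd: "QQ n V dvd n" if "V \<subseteq> I" for V
    using QQ_compl[OF n0, of V] that by (auto simp: I_def) (metis dvd_triv_left)
  have nz: "complex_of_real x - \<zeta> j \<noteq> 0" for j
  proof
    assume "complex_of_real x - \<zeta> j = 0"
    then have "norm (complex_of_real x) = norm (\<zeta> j)" by simp
    then show False using assms by (simp add: \<zeta>_def)
  qed
  have expf: "exp (f j) = complex_of_real x - \<zeta> j" for j
    unfolding f_def using nz by (simp add: exp_Ln)
  have S: "{j\<in>{1..n}. unitary_gcd j n = 1} = {j\<in>{1..n}. UU n j = {}}"
    using UG[OF n0] QQ_eq1 UI by (auto simp: I_def)
  have L1: "poly (unitary_cyclotomic n) (complex_of_real x) = (\<Prod>j\<in>{j\<in>{1..n}. UU n j = {}}. exp (f j))"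
    unfolding unitary_cyclotomic_def S by (simp add: poly_prod expf \<zeta>_def)
  also have "\<dots> = exp (\<Sum>j\<in>{j\<in>{1..n}. UU n j = {}}. f j)"
    by (simp add: exp_sum)
  also have "(\<Sum>j\<in>{j\<in>{1..n}. UU n j = {}}. f j) = (\<Sum>j\<in>{1..n}. (if UU n j = {} then 1 else 0) * f j)"
    by (subst sum.inter_filter) (auto intro: sum.cong)
  also have "\<dots> = (\<Sum>W\<in>Pow I. (-1)^card W * (\<Sum>j\<in>{j\<in>{1..n}. QQ n W dvd j}. f j))"
    using KEY[OF n0, of "{}" f] by (simp add: I_def)
  finally have L2: "poly (unitary_cyclotomic n) (complex_of_real x) =
      exp (\<Sum>W\<in>Pow I. (-1)^card W * (\<Sum>j\<in>{j\<in>{1..n}. QQ n W dvd j}. f j))" .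
  have F: "exp (\<Sum>j\<in>{j\<in>{1..n}. QQ n W dvd j}. f j) = exp (complex_of_real (h (I - W)))"
    if W: "W \<subseteq> I" for W
  proof -
    define c where "c = QQ n W"
    define m where "m = QQ n (I - W)"
    have cm: "c * m = n" unfolding c_def m_def using QQ_compl[OF n0, of W] W by (simp add: I_def)
    have m0: "m > 0" using cm n0 by (metis gr0I mult_0_right)
    have c0: "c > 0" using cm n0 by (metis gr0I mult_0)
    have "exp (\<Sum>j\<in>{j\<in>{1..n}. QQ n W dvd j}. f j) = (\<Prod>j\<in>{j\<in>{1..n}. c dvd j}. exp (f j))"
      by (simp add: exp_sum c_def)
    also have "\<dots> = (\<Prod>j\<in>{j\<in>{1..n}. c dvd j}. complex_of_real x - \<zeta> j)" by (simp add: expf)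
    also have "\<dots> = (\<Prod>k\<in>{1..n div c}. complex_of_real x - \<zeta> (c*k))"
    proof -
      have "bij_betw (\<lambda>k. c*k) {1..n div c} {j\<in>{1..n}. c dvd j}"
        by (rule bij_multiples) (use c0 cm in auto)
      then show ?thesis by (rule prod.reindex_bij_betw[symmetric])
    qed
    also have "n div c = m" using cm c0 by auto
    also have "(\<Prod>k\<in>{1..m}. complex_of_real x - \<zeta> (c*k)) = (\<Prod>k\<in>{1..m}. complex_of_real x - cis (2*pi*real k/real m))"
      unfolding \<zeta>_def using zeta_mult[OF n0 cm] by simp
    also have "\<dots> = complex_of_real x ^ m - 1" by (rule roots_prod2[OF m0])
    also have "\<dots> = complex_of_real (x ^ m - 1)" by simp
    also have "x ^ m - 1 = exp (h (I - W))"
    proof -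
      have "x ^ m > 1" using assms m0 by (simp add: one_less_power)
      then show ?thesis by (simp add: h_def m_def)
    qed
    finally show ?thesis by (simp add: exp_of_real)
  qed
  have L3: "poly (unitary_cyclotomic n) (complex_of_real x) =
      complex_of_real (exp (\<Sum>W\<in>Pow I. (-1)^card W * h (I - W)))"
  proof -
    have "exp (\<Sum>W\<in>Pow I. (-1)^card W * (\<Sum>j\<in>{j\<in>{1..n}. QQ n W dvd j}. f j)) =
          (\<Prod>W\<in>Pow I. exp ((-1)^card W * (\<Sum>j\<in>{j\<in>{1..n}. QQ n W dvd j}. f j)))"
      by (simp add: exp_sum finI)
    also have "\<dots> = (\<Prod>W\<in>Pow I. exp ((-1)^card W * complex_of_real (h (I - W))))"
      by (intro prod.cong refl expE F) auto
    also have "\<dots> = exp (\<Sum>W\<in>Pow I. (-1)^card W * complex_of_real (h (I - W)))"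
      by (simp add: exp_sum finI)
    also have "(\<Sum>W\<in>Pow I. (-1)^card W * complex_of_real (h (I - W))) =
        complex_of_real (\<Sum>W\<in>Pow I. (-1)^card W * h (I - W))"
      by (simp add: of_real_sum)
    also have "exp (complex_of_real (\<Sum>W\<in>Pow I. (-1)^card W * h (I - W))) =
        complex_of_real (exp (\<Sum>W\<in>Pow I. (-1)^card W * h (I - W)))"
      by (rule exp_of_real)
    finally show ?thesis using L2 by simp
  qed
  have R1: "(\<Prod>j=1..n. (x ^ unitary_gcd j n - 1) powr cos (2 * pi * real j / real n)) =
      exp (\<Sum>j=1..n. cos (2 * pi * real j / real n) * h (UU n j))"
  proof -
    have "(x ^ unitary_gcd j n - 1) powr cos (2 * pi * real j / real n) =
          exp (cos (2 * pi * real j / real n) * h (UU n j))" for j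
    proof -
      have "x ^ QQ n (UU n j) > 1" using assms QQpos[OF UI] by (simp add: one_less_power)
      then show ?thesis using UG[OF n0] by (simp add: powr_def h_def)
    qed
    then show ?thesis by (simp add: exp_sum)
  qed
  have inner2: "(\<Sum>j\<in>{j\<in>{1..n}. QQ n V dvd j}. cos (2 * pi * real j / real n)) = (if V = I then 1 else 0)"
    if V: "V \<subseteq> I" for V
  proof -
    define c where "c = QQ n V"
    define m where "m = QQ n (I - V)"
    have cm: "c * m = n" unfolding c_def m_def using QQ_compl[OF n0, of V] V by (simp add: I_def)
    have m0: "m > 0" using cm n0 by (metis gr0I mult_0_right)
    have c0: "c > 0" using cm n0 by (metis gr0I mult_0)
    have "(\<Sum>j\<in>{j\<in>{1..n}. QQ n V dvd j}. cos (2 * pi * real j / real n)) =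
          (\<Sum>k\<in>{1..n div c}. cos (2 * pi * real (c*k) / real n))"
      unfolding c_def[symmetric] by (rule sum_multiples) (use c0 cm in auto)
    also have "n div c = m" using cm c0 by auto
    also have "(\<Sum>k\<in>{1..m}. cos (2 * pi * real (c*k) / real n)) = (\<Sum>k\<in>{1..m}. cos (2*pi*real k/real m))"
      using cos_mult[OF n0 cm] by simp
    also have "\<dots> = (if m = 1 then 1 else 0)" by (rule cos_sum[OF m0])
    also have "(m = 1) = (I - V = {})" unfolding m_def by (rule QQ_eq1) (auto simp: I_def)
    also have "(I - V = {}) = (V = I)" using V by auto
    finally show ?thesis .
  qed
  have inner: "(\<Sum>j\<in>{1..n}. (if UU n j = T then 1 else 0) * cos (2 * pi * real j / real n)) = (-1)^card (I - T)"
    if T: "T \<subseteq> I" for T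
  proof -
    have "(\<Sum>j\<in>{1..n}. (if UU n j = T then 1 else 0) * cos (2 * pi * real j / real n)) =
      (\<Sum>W\<in>Pow (I - T). (-1)^card W * (\<Sum>j\<in>{j\<in>{1..n}. QQ n (T \<union> W) dvd j}. cos (2 * pi * real j / real n)))"
      using KEY[OF n0, of T] T by (simp add: I_def)
    also have "\<dots> = (\<Sum>W\<in>Pow (I - T). if W = I - T then (-1)^card W else 0)"
    proof (intro sum.cong refl)
      fix W assume "W \<in> Pow (I - T)"
      then have W: "W \<subseteq> I - T" by auto
      then have "T \<union> W \<subseteq> I" using T by auto
      moreover have "(T \<union> W = I) = (W = I - T)" using T W by auto
      ultimately show "(-1)^card W * (\<Sum>j\<in>{j\<in>{1..n}. QQ n (T \<union> W) dvd j}. cos (2 * pi * real j / real n)) =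
          (if W = I - T then (-1)^card W else 0)" using inner2 by simp
    qed
    also have "\<dots> = (-1)^card (I - T)" using finI by (subst sum.delta) auto
    finally show ?thesis .
  qed
  have R2: "(\<Sum>j=1..n. cos (2 * pi * real j / real n) * h (UU n j)) = (\<Sum>T\<in>Pow I. h T * (-1)^card (I - T))"
  proof -
    have "(\<Sum>j=1..n. cos (2 * pi * real j / real n) * h (UU n j)) =
          (\<Sum>j=1..n. \<Sum>T\<in>Pow I. h T * ((if UU n j = T then 1 else 0) * cos (2 * pi * real j / real n)))"
    proof (intro sum.cong refl)
      fix j
      have "(\<Sum>T\<in>Pow I. h T * ((if UU n j = T then 1 else 0) * cos (2 * pi * real j / real n))) =
            (\<Sum>T\<in>Pow I. if UU n j = T then h T * cos (2 * pi * real j / real n) else 0)"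
        by (intro sum.cong refl) auto
      also have "\<dots> = h (UU n j) * cos (2 * pi * real j / real n)"
        using finI UI[of j] by (subst sum.delta') auto
      finally show "cos (2 * pi * real j / real n) * h (UU n j) =
          (\<Sum>T\<in>Pow I. h T * ((if UU n j = T then 1 else 0) * cos (2 * pi * real j / real n)))" by simp
    qed
    also have "\<dots> = (\<Sum>T\<in>Pow I. \<Sum>j=1..n. h T * ((if UU n j = T then 1 else 0) * cos (2 * pi * real j / real n)))"
      by (rule sum.swap)
    also have "\<dots> = (\<Sum>T\<in>Pow I. h T * (-1)^card (I - T))"
    proof (intro sum.cong refl)
      fix T assume "T \<in> Pow I"
      then have T: "T \<subseteq> I" by auto
      have "(\<Sum>j=1..n. h T * ((if UU n j = T then 1 else 0) * cos (2 * pi * real j / real n))) =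
            h T * (\<Sum>j=1..n. (if UU n j = T then 1 else 0) * cos (2 * pi * real j / real n))"
        by (rule sum_distrib_left[symmetric])
      also have "\<dots> = h T * (-1)^card (I - T)" by (simp only: inner[OF T])
      finally show "(\<Sum>j=1..n. h T * ((if UU n j = T then 1 else 0) * cos (2 * pi * real j / real n))) =
            h T * (-1)^card (I - T)" .
    qed
    finally show ?thesis .
  qed
  have R3: "(\<Sum>W\<in>Pow I. (-1)^card W * h (I - W)) = (\<Sum>T\<in>Pow I. h T * (-1)^card (I - T))"
  proof -
    have bij: "bij_betw (\<lambda>W. I - W) (Pow I) (Pow I)"
      by (rule bij_betwI[where g = "\<lambda>W. I - W"]) auto
    have "(\<Sum>T\<in>Pow I. h T * (-1)^card (I - T)) = (\<Sum>W\<in>Pow I. h (I - W) * (-1)^card (I - (I - W)))"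
      by (rule sum.reindex_bij_betw[OF bij, symmetric])
    also have "\<dots> = (\<Sum>W\<in>Pow I. (-1)^card W * h (I - W))"
      by (intro sum.cong refl) (auto simp: Diff_Diff_Int Int_absorb1)
    finally show ?thesis by simp
  qed
  show ?thesis using L3 R1 R2 R3 by simp
qed


end
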